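(* Let $f(z)=z+\sum_{n=2}^{\infty}a_nz^n$ belong to $\mathcal{S}^*_{ch}$, and let $\Gamma_1,\Gamma_2$ be the first two logarithmic inverse coefficients of $f$, i.e. $$\Gamma_1=-\tfrac12 a_2,\qquad \Gamma_2=-\tfrac12\Big(a_3-\tfrac32 a_2^2\Big).$$ Then $|\Gamma_1|\le\frac12$ and $|\Gamma_2|\le\frac38$. Both inequalities are sharp, with equality for $f_1(z)=z\exp\left(\int_0^z\frac{t+\cosh t-1}{t}\,dt\right)$, which belongs to $\mathcal{S}^*_{ch}$.
   Context: $\mathbb{D}=\{z\in\mathbb{C}:|z|<1\}$. $\mathcal{A}$ is the class of analytic $f$ on $\mathbb{D}$ with $f(0)=0$, $f'(0)=1$. For analytic $g,h$ on $\mathbb{D}$, $g\prec h$ means there is an analytic $\omega$ on $\mathbb{D}$ with $\omega(0)=0$, $|\omega(z)|<1$, and $g=h\circ\omega$. $\mathcal{S}^*_{ch}$ is the class of $f\in\mathcal{A}$ with $\frac{zf'(z)}{f(z)}\prec z+\cosh z$ on $\mathbb{D}$. For such $f$ with inverse $F=f^{-1}$ defined near $0$, the logarithmic inverse coefficients $\Gamma_n$ are defined by $\log\frac{f^{-1}(w)}{w}=2\sum_{n\ge1}\Gamma_nw^n$ for $w$ near $0$; the displayed formulas for $\Gamma_1,\Gamma_2$ in terms of $a_2,a_3$ follow from this definition. *)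

theory Defs
  imports "HOL-Complex_Analysis.Complex_Analysis"
begin

definition subordinate :: "(complex \<Rightarrow> complex) \<Rightarrow> (complex \<Rightarrow> complex) \<Rightarrow> bool" where
  "subordinate g h \<longleftrightarrow>
     g holomorphic_on ball 0 1 \<and> h holomorphic_on ball 0 1 \<and>
     (\<exists>\<omega>. \<omega> holomorphic_on ball 0 1 \<and> \<omega> 0 = 0 \<and>
          (\<forall>z\<in>ball 0 1. norm (\<omega> z) < 1 \<and> g z = h (\<omega> z)))"

definition classA :: "(complex \<Rightarrow> complex) \<Rightarrow> bool" where
  "classA f \<longleftrightarrow> f holomorphic_on ball 0 1 \<and> f 0 = 0 \<and> deriv f 0 = 1"

definition logderiv_quot :: "(complex \<Rightarrow> complex) \<Rightarrow> complex \<Rightarrow> complex" where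
  "logderiv_quot f z = (if z = 0 then 1 else z * deriv f z / f z)"

text \<open>The class S*_ch: z f'/f subordinate to z + cosh z (f nonvanishing off 0, so
  that the quotient is defined).\<close>
definition Sch :: "(complex \<Rightarrow> complex) \<Rightarrow> bool" where
  "Sch f \<longleftrightarrow> classA f \<and> (\<forall>z\<in>ball 0 1. z \<noteq> 0 \<longrightarrow> f z \<noteq> 0) \<and>
     subordinate (logderiv_quot f) (\<lambda>z. z + cosh z)"

definition coeff :: "(complex \<Rightarrow> complex) \<Rightarrow> nat \<Rightarrow> complex" where
  "coeff f n = (deriv ^^ n) f 0 / of_nat (fact n)"

definition Gamma1 :: "(complex \<Rightarrow> complex) \<Rightarrow> complex" where
  "Gamma1 f = - (1/2) * coeff f 2"

definition Gamma2 :: "(complex \<Rightarrow> complex) \<Rightarrow> complex" where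
  "Gamma2 f = - (1/2) * (coeff f 3 - (3/2) * (coeff f 2)^2)"

definition f1_integrand :: "complex \<Rightarrow> complex" where
  "f1_integrand t = (if t = 0 then 1 else (t + cosh t - 1) / t)"

definition f1 :: "complex \<Rightarrow> complex" where
  "f1 z = z * exp (contour_integral (linepath 0 z) f1_integrand)"

end

theory Submission
  imports Defs "HOL-Complex_Analysis.Riemann_Mapping"
begin

lemma holo_cosh [holomorphic_intros]: "f holomorphic_on A \<Longrightarrow> (\<lambda>x. cosh (f x :: complex)) holomorphic_on A"
  unfolding cosh_def by (intro holomorphic_intros)

lemma derivf_shift: "(deriv ^^ k) (deriv f) = (deriv ^^ (Suc k)) f"
  by (simp add: funpow_Suc_right del: funpow.simps)

lemma coeff_rel:
  assumes hf: "f holomorphic_on ball 0 1" and f0: "f 0 = 0" and df0: "deriv f 0 = 1"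
    and hw: "\<omega> holomorphic_on ball 0 1" and w0: "\<omega> 0 = 0"
    and eq: "\<And>z. z \<in> ball 0 1 \<Longrightarrow> z * deriv f z = f z * (\<omega> z + cosh (\<omega> z))"
  shows "coeff f 2 = deriv \<omega> 0"
    and "coeff f 3 = 3/4 * (deriv \<omega> 0)^2 + (deriv ^^ 2) \<omega> 0 / 4"
proof -
  define S :: "complex set" where "S = ball 0 1"
  define q where "q = (\<lambda>z. \<omega> z + cosh (\<omega> z))"
  have oS: "open S" and zS: "0 \<in> S" by (auto simp: S_def)
  have hq: "q holomorphic_on S" unfolding q_def S_def by (intro holomorphic_intros hw)
  have hw': "\<omega> holomorphic_on S" using hw by (simp add: S_def)
  have hf': "f holomorphic_on S" using hf by (simp add: S_def)
  have hdf: "deriv f holomorphic_on S" using hf' oS by (rule holomorphic_deriv)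
  have hdw: "deriv \<omega> holomorphic_on S" using hw' oS by (rule holomorphic_deriv)
  have q0: "q 0 = 1" by (simp add: q_def w0)
  have LR: "(deriv ^^ n) (\<lambda>z. z * deriv f z) 0 = (deriv ^^ n) (\<lambda>z. f z * q z) 0" for n
    by (rule higher_deriv_transform_within_open[OF _ _ oS zS])
       (auto intro!: holomorphic_intros hdf hf' hq hf hw simp: eq q_def S_def)
  have Lexp: "(deriv ^^ n) (\<lambda>z. z * deriv f z) 0 =
      (\<Sum>i = 0..n. of_nat (n choose i) * (deriv ^^ i) (\<lambda>w. w) 0 * (deriv ^^ (n-i)) (deriv f) 0)" for n
    by (rule higher_deriv_mult[OF _ hdf oS zS]) (intro holomorphic_intros)
  have Rexp: "(deriv ^^ n) (\<lambda>z. f z * q z) 0 =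
      (\<Sum>i = 0..n. of_nat (n choose i) * (deriv ^^ i) f 0 * (deriv ^^ (n-i)) q 0)" for n
    by (rule higher_deriv_mult[OF hf' hq oS zS])
  have dq: "deriv q z = (1 + sinh (\<omega> z)) * deriv \<omega> z" if "z \<in> S" for z
  proof -
    have "(\<omega> has_field_derivative deriv \<omega> z) (at z)"
      using holomorphic_derivI[OF hw' oS that] .
    then have "(q has_field_derivative (1 + sinh (\<omega> z)) * deriv \<omega> z) (at z)"
      unfolding q_def by (auto intro!: derivative_eq_intros simp: algebra_simps)
    then show ?thesis by (rule DERIV_imp_deriv)
  qed
  have dq0: "deriv q 0 = deriv \<omega> 0" using dq[OF zS] by (simp add: w0)
  have ddq0: "deriv (deriv q) 0 = (deriv \<omega> 0)^2 + deriv (deriv \<omega>) 0"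
  proof -
    have ev: "\<forall>\<^sub>F z in nhds 0. deriv q z = (1 + sinh (\<omega> z)) * deriv \<omega> z"
      using eventually_nhds_in_open[OF oS zS] by (rule eventually_mono) (use dq in auto)
    have d1: "(\<omega> has_field_derivative deriv \<omega> 0) (at 0)"
      using holomorphic_derivI[OF hw' oS zS] .
    have d2: "(deriv \<omega> has_field_derivative deriv (deriv \<omega>) 0) (at 0)"
      using holomorphic_derivI[OF hdw oS zS] .
    have "((\<lambda>z. (1 + sinh (\<omega> z)) * deriv \<omega> z) has_field_derivative
          (deriv \<omega> 0)^2 + deriv (deriv \<omega>) 0) (at 0)"
      by (rule derivative_eq_intros d1 d2 refl | simp add: w0 power2_eq_square)+
    then have "deriv (\<lambda>z. (1 + sinh (\<omega> z)) * deriv \<omega> z) 0 = (deriv \<omega> 0)^2 + deriv (deriv \<omega>) 0"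
      by (rule DERIV_imp_deriv)
    moreover have "deriv (deriv q) 0 = deriv (\<lambda>z. (1 + sinh (\<omega> z)) * deriv \<omega> z) 0"
      by (rule deriv_cong_ev[OF ev refl])
    ultimately show ?thesis by simp
  qed
  have E2: "(deriv ^^ 2) f 0 = 2 * deriv \<omega> 0"
    using LR[of 2] unfolding Lexp Rexp derivf_shift
    by (simp add: numeral_2_eq_2 f0 df0 q0 dq0 )
  have E3: "2 * (deriv ^^ 3) f 0 = 3 * ((deriv \<omega> 0)^2 + deriv (deriv \<omega>) 0) + 3 * (deriv ^^ 2) f 0 * deriv \<omega> 0"
    using LR[of 3] unfolding Lexp Rexp derivf_shift
    by (simp add: numeral_2_eq_2 numeral_3_eq_3 f0 df0 q0 dq0 ddq0 algebra_simps)
  show "coeff f 2 = deriv \<omega> 0"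
    using E2 by (simp add: coeff_def)
  show "coeff f 3 = 3/4 * (deriv \<omega> 0)^2 + (deriv ^^ 2) \<omega> 0 / 4"
    using E3 E2 by (simp add: coeff_def numeral_2_eq_2 numeral_3_eq_3 field_simps)
qed


lemma f1_integrand_tendsto: "(f1_integrand \<longlongrightarrow> 1) (at 0)"
proof -
  have "(cosh has_field_derivative sinh 0 * 1) (at (0::complex))"
    by (rule has_field_derivative_cosh[OF DERIV_ident])
  then have "((\<lambda>t. (cosh t - cosh 0) / (t - 0)) \<longlongrightarrow> sinh (0::complex) * 1) (at 0)"
    using has_field_derivative_iff by blast
  then have "((\<lambda>t. 1 + (cosh t - 1) / t) \<longlongrightarrow> 1 + 0) (at (0::complex))"
    by (intro tendsto_add) auto
  moreover have "\<forall>\<^sub>F t in at 0. 1 + (cosh t - 1) / t = f1_integrand t"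
    unfolding eventually_at_filter by (rule always_eventually) (auto simp: f1_integrand_def field_simps)
  ultimately show ?thesis by (simp add: Lim_transform_eventually)
qed

lemma f1_integrand_holo: "f1_integrand holomorphic_on UNIV"
proof (rule no_isolated_singularity'[where K="{0}"])
  show "(f1_integrand \<longlongrightarrow> f1_integrand z) (at z within UNIV)" if "z \<in> {0}" for z
    using that f1_integrand_tendsto by (simp add: f1_integrand_def)
  have "(\<lambda>t. (t + cosh t - 1) / t) holomorphic_on (UNIV - {0})"
    by (intro holomorphic_intros) auto
  then show "f1_integrand holomorphic_on (UNIV - {0})"
    by (rule holomorphic_transform) (auto simp: f1_integrand_def)
qed auto

definition G1 where "G1 z = contour_integral (linepath 0 z) f1_integrand"

lemma G1_deriv: "(G1 has_field_derivative f1_integrand z) (at z)"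
proof -
  have "((\<lambda>x. contour_integral(linepath 0 x) f1_integrand) has_field_derivative f1_integrand z) (at z within UNIV)"
  proof (rule triangle_contour_integrals_convex_primitive)
    show "continuous_on UNIV f1_integrand"
      using f1_integrand_holo holomorphic_on_imp_continuous_on by blast
    fix b c :: complex
    have "(f1_integrand has_contour_integral 0) (linepath 0 b +++ linepath b c +++ linepath c 0)"
      by (rule Cauchy_theorem_triangle) (rule holomorphic_on_subset[OF f1_integrand_holo], auto)
    then show "contour_integral (linepath 0 b) f1_integrand + contour_integral (linepath b c) f1_integrand +
                       contour_integral (linepath c 0) f1_integrand = 0"
      by (rule has_chain_integral_chain_integral3)
  qed auto
  then show ?thesis by (simp add: G1_def[abs_def])
qed

lemma G1_0: "G1 0 = 0" by (simp add: G1_def)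

lemma f1_eq: "f1 = (\<lambda>z. z * exp (G1 z))"
  by (rule ext) (simp add: f1_def G1_def)

lemma f1_deriv: "(f1 has_field_derivative (exp (G1 z) + z * (exp (G1 z) * f1_integrand z))) (at z)"
proof -
  have e: "((\<lambda>z. exp (G1 z)) has_field_derivative exp (G1 z) * f1_integrand z) (at z)"
    by (rule DERIV_chain2[OF DERIV_exp G1_deriv])
  show ?thesis unfolding f1_eq
    by (rule DERIV_cong[OF DERIV_mult[OF DERIV_ident e]]) (simp add: algebra_simps)
qed


lemma schwarz_c2:
  assumes hw: "\<omega> holomorphic_on ball 0 1" and w0: "\<omega> 0 = 0"
    and lt: "\<And>z. z \<in> ball 0 1 \<Longrightarrow> norm (\<omega> z) < 1"
  shows "norm (deriv \<omega> 0) \<le> 1"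
    and "norm ((deriv ^^ 2) \<omega> 0) \<le> 2 * (1 - norm (deriv \<omega> 0)^2)"
proof -
  define S :: "complex set" where "S = ball 0 1"
  have oS: "open S" and zS: "0 \<in> S" by (auto simp: S_def)
  have lt': "\<And>z. norm z < 1 \<Longrightarrow> norm (\<omega> z) < 1" using lt by auto
  show c1: "norm (deriv \<omega> 0) \<le> 1" using Schwarz_Lemma(2)[OF hw w0 lt', of 0] by simp
  obtain h where hh: "h holomorphic_on ball 0 1" and wh: "\<And>z. norm z < 1 \<Longrightarrow> \<omega> z = z * h z"
      and dh: "deriv \<omega> 0 = h 0"
    using Schwarz3[OF hw w0] by blast
  define c where "c = deriv \<omega> 0"
  have W: "(deriv ^^ 2) \<omega> 0 = 2 * deriv h 0"
  proof -
    have "(deriv ^^ 2) \<omega> 0 = (deriv ^^ 2) (\<lambda>z. z * h z) 0"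
      by (rule higher_deriv_transform_within_open[where S="ball 0 1"])
         (auto intro!: holomorphic_intros hh hw simp: wh)
    also have "\<dots> = (\<Sum>i = 0..2. of_nat (2 choose i) * (deriv ^^ i) (\<lambda>w. w) 0 * (deriv ^^ (2-i)) h 0)"
      by (rule higher_deriv_mult[OF _ hh]) (auto intro!: holomorphic_intros)
    also have "\<dots> = 2 * deriv h 0"
      by (simp add: numeral_2_eq_2)
    finally show ?thesis .
  qed
  show "norm ((deriv ^^ 2) \<omega> 0) \<le> 2 * (1 - norm (deriv \<omega> 0)^2)"
  proof (cases "norm c = 1")
    case True
    then obtain \<alpha> where a: "\<And>z. norm z < 1 \<Longrightarrow> \<omega> z = \<alpha> * z"
      using Schwarz_Lemma(3)[OF hw w0 lt', of 0] c_def by force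
    have "(deriv ^^ 2) \<omega> 0 = (deriv ^^ 2) (\<lambda>z. \<alpha> * z) 0"
      by (rule higher_deriv_transform_within_open[where S="ball 0 1"])
         (auto intro!: holomorphic_intros hw simp: a)
    then have "(deriv ^^ 2) \<omega> 0 = 0" by simp
    then show ?thesis using True c_def by simp
  next
    case False
    then have cl: "norm c < 1" using c1 c_def by simp
    have hlt: "norm (h z) < 1" if z: "norm z < 1" for z
    proof (cases "z = 0")
      case True then show ?thesis using cl dh c_def by simp
    next
      case False
      have le: "norm (\<omega> z) \<le> norm z" using Schwarz_Lemma(1)[OF hw w0 lt' z] .
      have ne: "norm (\<omega> z) \<noteq> norm z"
      proof
        assume "norm (\<omega> z) = norm z"
        then obtain \<alpha> where a: "\<And>z. norm z < 1 \<Longrightarrow> \<omega> z = \<alpha> * z" and na: "norm \<alpha> = 1"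
          using Schwarz_Lemma(3)[OF hw w0 lt', of 0] z False by force
        have "\<forall>\<^sub>F x in nhds 0. \<omega> x = \<alpha> * x"
          using eventually_nhds_in_open[OF oS zS] by (rule eventually_mono) (auto simp: S_def a)
        then have "deriv \<omega> 0 = deriv (\<lambda>x. \<alpha> * x) 0" by (rule deriv_cong_ev) simp
        then have "c = \<alpha>" by (simp add: c_def)
        then show False using na cl by simp
      qed
      have "norm (\<omega> z) = norm z * norm (h z)" using wh[OF z] by (simp add: norm_mult)
      moreover have "norm z > 0" using False by simp
      ultimately have "norm z * norm (h z) < norm z * 1" using le ne by simp
      then show ?thesis using \<open>norm z > 0\<close> by (simp only: mult_less_cancel_left_pos)
    qed
    define g where "g = (\<lambda>z. Moebius_function 0 c (h z))"
    have g_eq: "g = (\<lambda>z. (h z - c) / (1 - cnj c * h z))"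
      by (simp add: g_def Moebius_function_def)
    have hg: "g holomorphic_on ball 0 1"
      unfolding g_def
      by (rule holomorphic_on_compose_gen[OF hh Moebius_function_holomorphic[OF cl], unfolded o_def])
         (auto simp: hlt)
    have g0: "g 0 = 0" by (simp add: g_def dh c_def Moebius_function_eq_zero)
    have glt: "norm z < 1 \<Longrightarrow> norm (g z) < 1" for z
      unfolding g_def using Moebius_function_norm_lt_1[OF cl hlt] by blast
    have dg: "norm (deriv g 0) \<le> 1" using Schwarz_Lemma(2)[OF hg g0 glt, of 0] by simp
    have cc: "cnj c * c = of_real (norm c ^ 2)"
      by (simp only: complex_norm_square mult.commute)
    have den: "1 - cnj c * c \<noteq> 0"
    proof
      assume "1 - cnj c * c = 0"
      then have "norm c ^ 2 = 1" unfolding cc by (metis eq_iff_diff_eq_0 of_real_eq_1_iff)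
      then show False using cl mult_strict_mono[of "norm c" 1 "norm c" 1] by (simp add: power2_eq_square)
    qed
    have d1: "(h has_field_derivative deriv h 0) (at 0)"
      using holomorphic_derivI[OF hh _ ] by auto
    have hc: "h 0 = c" by (simp add: dh c_def)
    have D0: "((\<lambda>z. (h z - c) / (1 - cnj c * h z)) has_field_derivative
        (deriv h 0 * (1 - cnj c * h 0) - (h 0 - c) * (- (cnj c * deriv h 0))) / ((1 - cnj c * h 0) * (1 - cnj c * h 0))) (at 0)"
      using den by (rule_tac DERIV_divide) (auto intro!: derivative_eq_intros d1 simp: hc)
    have "(g has_field_derivative deriv h 0 / (1 - cnj c * c)) (at 0)"
      using D0 den unfolding g_eq by (simp add: hc)
    then have "deriv g 0 = deriv h 0 / (1 - cnj c * c)" by (rule DERIV_imp_deriv)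
    then have e: "deriv h 0 = deriv g 0 * of_real (1 - norm c ^ 2)"
      using den unfolding cc by (simp add: field_simps)
    have nn: "0 \<le> 1 - norm c ^ 2" using cl by (simp add: power_le_one)
    have "norm (deriv h 0) = norm (deriv g 0) * norm (of_real (1 - norm c ^ 2) :: complex)"
      unfolding e norm_mult ..
    also have "norm (of_real (1 - norm c ^ 2) :: complex) = 1 - norm c ^ 2"
      using nn by (metis norm_of_real abs_of_nonneg)
    finally have "norm (deriv h 0) = norm (deriv g 0) * (1 - norm c ^ 2)" .
    also have "\<dots> \<le> 1 * (1 - norm c ^ 2)"
      by (rule mult_right_mono[OF dg]) (use cl in \<open>simp add: power_le_one\<close>)
    finally show ?thesis using W c_def by (simp add: norm_mult)
  qed
qed


lemma f1_key: "z * deriv f1 z = f1 z * (z + cosh z)"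
proof -
  have d: "deriv f1 z = exp (G1 z) + z * (exp (G1 z) * f1_integrand z)"
    using f1_deriv by (rule DERIV_imp_deriv)
  show ?thesis
  proof (cases "z = 0")
    case True then show ?thesis by (simp add: f1_eq)
  next
    case False
    then have "z * f1_integrand z = z + cosh z - 1" by (simp add: f1_integrand_def)
    moreover have "z * (exp (G1 z) + z * (exp (G1 z) * f1_integrand z)) =
        z * exp (G1 z) * (1 + z * f1_integrand z)" by (simp add: algebra_simps)
    ultimately show ?thesis unfolding d by (simp add: f1_eq)
  qed
qed

lemma f1_holo: "f1 holomorphic_on S"
  using f1_deriv by (auto simp: holomorphic_on_def field_differentiable_def intro: has_field_derivative_at_within)

lemma f1_d0: "deriv f1 0 = 1"
  using DERIV_imp_deriv[OF f1_deriv[of 0]] by (simp add: G1_0)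

lemma f1_0: "f1 0 = 0" by (simp add: f1_eq)

lemma f1_nz: "z \<noteq> 0 \<Longrightarrow> f1 z \<noteq> 0" by (simp add: f1_eq)

lemma Sch_f1: "Sch f1"
proof -
  have lq: "logderiv_quot f1 z = z + cosh z" for z
  proof (cases "z = 0")
    case True then show ?thesis by (simp add: logderiv_quot_def)
  next
    case False then show ?thesis using f1_key[of z] f1_nz[of z]
      by (simp add: logderiv_quot_def field_simps)
  qed
  have hp: "(\<lambda>z. z + cosh z) holomorphic_on ball 0 1"
    by (intro holomorphic_intros)
  have lq': "logderiv_quot f1 = (\<lambda>z. z + cosh z)" by (rule ext) (rule lq)
  have sb: "subordinate (\<lambda>z. z + cosh z) (\<lambda>z. z + cosh z)"
    unfolding subordinate_def
    by (intro conjI hp exI[of _ "\<lambda>z. z"]) (auto intro: holomorphic_intros)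
  show ?thesis unfolding Sch_def classA_def lq'
    by (intro conjI ballI impI sb f1_holo f1_0 f1_d0 f1_nz)
qed

lemma f1_coeffs: "coeff f1 2 = 1" "coeff f1 3 = 3/4"
proof -
  have A: "f1 holomorphic_on ball 0 1" by (rule f1_holo)
  have B: "(\<lambda>z. z) holomorphic_on ball 0 1" by (intro holomorphic_intros)
  note R = coeff_rel[OF A f1_0 f1_d0 B refl, of, OF f1_key]
  show "coeff f1 2 = 1" using R(1) by simp
  show "coeff f1 3 = 3/4" using R(2) by simp
qed

lemma Sch_bounds:
  assumes "Sch f"
  shows "norm (Gamma1 f) \<le> 1/2 \<and> norm (Gamma2 f) \<le> 3/8"
proof -
  from assms have hf: "f holomorphic_on ball 0 1" and f0: "f 0 = 0" and df0: "deriv f 0 = 1"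
    and nz: "\<forall>z\<in>ball 0 1. z \<noteq> 0 \<longrightarrow> f z \<noteq> 0"
    and sub: "subordinate (logderiv_quot f) (\<lambda>z. z + cosh z)"
    by (auto simp: Sch_def classA_def)
  from sub obtain \<omega> where hw: "\<omega> holomorphic_on ball 0 1" and w0: "\<omega> 0 = 0"
    and wl: "\<forall>z\<in>ball 0 1. norm (\<omega> z) < 1 \<and> logderiv_quot f z = \<omega> z + cosh (\<omega> z)"
    unfolding subordinate_def by blast
  have eq: "z * deriv f z = f z * (\<omega> z + cosh (\<omega> z))" if z: "z \<in> ball 0 1" for z
  proof (cases "z = 0")
    case True then show ?thesis by (simp add: f0)
  next
    case False
    then have "f z \<noteq> 0" using nz z by blast
    moreover have "logderiv_quot f z = \<omega> z + cosh (\<omega> z)" using wl z by blast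
    then have "z * deriv f z / f z = \<omega> z + cosh (\<omega> z)"
      using False by (simp add: logderiv_quot_def)
    ultimately show ?thesis by (simp add: field_simps)
  qed
  note C = coeff_rel[OF hf f0 df0 hw w0 eq]
  have lt: "\<And>z. z \<in> ball 0 1 \<Longrightarrow> norm (\<omega> z) < 1" using wl by blast
  note S = schwarz_c2[OF hw w0 lt]
  define c where "c = deriv \<omega> 0"
  define W where "W = (deriv ^^ 2) \<omega> 0"
  have c1: "norm c \<le> 1" using S(1) c_def by simp
  have W1: "norm W \<le> 2 * (1 - norm c ^ 2)" using S(2) c_def W_def by simp
  have g1: "Gamma1 f = - (1/2) * c" using C(1) by (simp add: Gamma1_def c_def)
  have "Gamma2 f = - (1/2) * (coeff f 3 - (3/2) * (coeff f 2)^2)" by (simp only: Gamma2_def)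
  also have "\<dots> = - (1/2) * ((3/4 * c^2 + W/4) - (3/2) * c^2)" by (simp only: C c_def W_def)
  also have "\<dots> = 3/8 * c^2 - W / 8" by (simp add: field_simps)
  finally have g2: "Gamma2 f = 3/8 * c^2 - W / 8" .
  have "norm (Gamma1 f) = norm c / 2" by (simp add: g1 norm_mult)
  then have G1: "norm (Gamma1 f) \<le> 1/2" using c1 by simp
  have "norm (Gamma2 f) \<le> norm (3/8 * c^2) + norm (W / 8)"
    unfolding g2 by (rule norm_triangle_ineq4)
  also have "\<dots> = 3/8 * norm c ^ 2 + norm W / 8" by (simp add: norm_mult norm_power norm_divide)
  also have "\<dots> \<le> 3/8 * norm c ^ 2 + (1 - norm c ^ 2) / 4" using W1 by simp
  also have "\<dots> \<le> 3/8"
  proof -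
    have "norm c ^ 2 \<le> 1" using c1 by (simp add: power_le_one)
    then show ?thesis unfolding diff_divide_distrib by linarith
  qed
  finally show ?thesis using G1 by simp
qed

theorem theorem3p1:
  "(\<forall>f. Sch f \<longrightarrow> norm (Gamma1 f) \<le> 1/2 \<and> norm (Gamma2 f) \<le> 3/8) \<and>
   Sch f1 \<and> norm (Gamma1 f1) = 1/2 \<and> norm (Gamma2 f1) = 3/8"
proof -
  have g1: "Gamma1 f1 = - 1/2" by (simp add: Gamma1_def f1_coeffs)
  have g2: "Gamma2 f1 = 3/8" by (simp add: Gamma2_def f1_coeffs)
  show ?thesis using Sch_bounds Sch_f1 by (simp add: g1 g2)
qed

end
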